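(* Let $p>2$ be prime and let $C$ be a $\mathbb{Z}_p\mathbb{Z}_{p^2}$-linear code of type $(\alpha,\beta;\gamma,\delta;\kappa)$ and length $n=\alpha+p\beta$. Then $\ker(C)\in\{\gamma+\delta,\gamma+\delta+1,\ldots,\gamma+2\delta\}$.
   Context: A $\mathbb{Z}_p\mathbb{Z}_{p^2}$-additive code $\mathcal{C}$ is a subgroup of $\mathbb{Z}_p^\alpha\times\mathbb{Z}_{p^2}^\beta$; as a group $\mathcal{C}\cong\mathbb{Z}_p^\gamma\times\mathbb{Z}_{p^2}^\delta$, and if $\kappa$ is the $\mathbb{Z}_p$-dimension of the projection onto the first $\alpha$ coordinates of the subcode of codewords of order dividing $p$, $\mathcal{C}$ has type $(\alpha,\beta;\gamma,\delta;\kappa)$. The Gray map is $\phi(\theta)=\theta''(1,\ldots,1)+\theta'(0,1,\ldots,p-1)$ for $\theta=\theta''p+\theta'\in\mathbb{Z}_{p^2}$, $\theta',\theta''\in\{0,\ldots,p-1\}$, and $\Phi(\mathbf{x},\mathbf{y})=(\mathbf{x},\phi(y_1),\ldots,\phi(y_\beta))$. A $\mathbb{Z}_p\mathbb{Z}_{p^2}$-linear code of that type is $C=\Phi(\mathcal{C})$. $K(C)=\{\mathbf{x}\in\mathbb{Z}_p^n\mid C+\mathbf{x}=C\}$ and $\ker(C)=\dim_{\mathbb{Z}_p}K(C)$. *)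

theory Defs
  imports Main "HOL-Computational_Algebra.Primes"
begin

definition vecs :: "nat \<Rightarrow> nat \<Rightarrow> nat list set" where
  "vecs m n = {xs. length xs = n \<and> (\<forall>a\<in>set xs. a < m)}"

definition vadd :: "nat \<Rightarrow> nat list \<Rightarrow> nat list \<Rightarrow> nat list" where
  "vadd m xs ys = map2 (\<lambda>a b. (a + b) mod m) xs ys"

definition vneg :: "nat \<Rightarrow> nat list \<Rightarrow> nat list" where
  "vneg m xs = map (\<lambda>a. (m - a) mod m) xs"

definition vsmul :: "nat \<Rightarrow> nat \<Rightarrow> nat list \<Rightarrow> nat list" where
  "vsmul m k xs = map (\<lambda>a. (k * a) mod m) xs"

text \<open>Elements of Z_p^alpha x Z_{p^2}^beta as pairs of lists; group operations.\<close>

type_synonym mixvec = "nat list \<times> nat list"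

definition mzero :: "nat \<Rightarrow> nat \<Rightarrow> mixvec" where
  "mzero \<alpha> \<beta> = (replicate \<alpha> 0, replicate \<beta> 0)"

definition madd :: "nat \<Rightarrow> mixvec \<Rightarrow> mixvec \<Rightarrow> mixvec" where
  "madd p u v = (vadd p (fst u) (fst v), vadd (p^2) (snd u) (snd v))"

definition mneg :: "nat \<Rightarrow> mixvec \<Rightarrow> mixvec" where
  "mneg p u = (vneg p (fst u), vneg (p^2) (snd u))"

definition msmul :: "nat \<Rightarrow> nat \<Rightarrow> mixvec \<Rightarrow> mixvec" where
  "msmul p k u = (vsmul p k (fst u), vsmul (p^2) k (snd u))"

definition additive_code :: "nat \<Rightarrow> nat \<Rightarrow> nat \<Rightarrow> mixvec set \<Rightarrow> bool" where
  "additive_code p \<alpha> \<beta> CC \<longleftrightarrow>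
     CC \<subseteq> vecs p \<alpha> \<times> vecs (p^2) \<beta> \<and> mzero \<alpha> \<beta> \<in> CC \<and>
     (\<forall>u\<in>CC. \<forall>v\<in>CC. madd p u v \<in> CC) \<and> (\<forall>u\<in>CC. mneg p u \<in> CC)"

definition msum :: "nat \<Rightarrow> nat \<Rightarrow> nat \<Rightarrow> mixvec list \<Rightarrow> mixvec" where
  "msum p \<alpha> \<beta> ws = foldr (madd p) ws (mzero \<alpha> \<beta>)"

text \<open>The group CC is isomorphic to Z_p^gamma x Z_{p^2}^delta: there are elements
  u_1..u_gamma (killed by p) and v_1..v_delta (killed by p^2) such that
  (a,b) \<mapsto> sum a_i u_i + sum b_j v_j is a bijection from
  Z_p^gamma x Z_{p^2}^delta onto CC (this map is then a group isomorphism).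
  kappa: the projection onto the first alpha coordinates of the subcode of
  codewords of order dividing p has Z_p-dimension kappa, i.e. p^kappa elements.\<close>

definition has_type ::
  "nat \<Rightarrow> nat \<Rightarrow> nat \<Rightarrow> nat \<Rightarrow> nat \<Rightarrow> nat \<Rightarrow> mixvec set \<Rightarrow> bool" where
  "has_type p \<alpha> \<beta> \<gamma> \<delta> \<kappa> CC \<longleftrightarrow>
     additive_code p \<alpha> \<beta> CC \<and>
     (\<exists>us vs. length us = \<gamma> \<and> length vs = \<delta> \<and> set us \<subseteq> CC \<and> set vs \<subseteq> CC \<and>
        (\<forall>u\<in>set us. msmul p p u = mzero \<alpha> \<beta>) \<and>
        (\<forall>v\<in>set vs. msmul p (p^2) v = mzero \<alpha> \<beta>) \<and>
        bij_betw (\<lambda>(a, b). msum p \<alpha> \<beta> (map2 (msmul p) a us @ map2 (msmul p) b vs))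
          (vecs p \<gamma> \<times> vecs (p^2) \<delta>) CC) \<and>
     card (fst ` {c\<in>CC. msmul p p c = mzero \<alpha> \<beta>}) = p ^ \<kappa>"

definition gray1 :: "nat \<Rightarrow> nat \<Rightarrow> nat list" where
  "gray1 p \<theta> = map (\<lambda>i. (\<theta> div p + (\<theta> mod p) * i) mod p) [0..<p]"

definition Gray :: "nat \<Rightarrow> mixvec \<Rightarrow> nat list" where
  "Gray p c = fst c @ concat (map (gray1 p) (snd c))"

definition kernel_set :: "nat \<Rightarrow> nat \<Rightarrow> nat list set \<Rightarrow> nat list set" where
  "kernel_set p n C = {x \<in> vecs p n. (\<lambda>c. vadd p c x) ` C = C}"

definition ker_dim :: "nat \<Rightarrow> nat \<Rightarrow> nat list set \<Rightarrow> nat" where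
  "ker_dim p n C = (THE k. card (kernel_set p n C) = p ^ k)"

end

theory Submission imports Defs "HOL-Algebra.Coset" begin

lemma vecs_alt: "vecs m n = {xs. set xs \<subseteq> {0..<m} \<and> length xs = n}"
  by (auto simp: vecs_def)
lemma finite_vecs: "finite (vecs m n)"
  unfolding vecs_alt by (rule finite_lists_length_eq) simp
lemma card_vecs: "card (vecs m n) = m ^ n"
  unfolding vecs_alt by (subst card_lists_length_eq) auto

lemma vadd_len[simp]: "length (vadd m xs ys) = min (length xs) (length ys)"
  by (simp add: vadd_def)
lemma vadd_nth[simp]: "i < length xs \<Longrightarrow> i < length ys \<Longrightarrow> vadd m xs ys ! i = (xs!i + ys!i) mod m"
  by (simp add: vadd_def)
lemma vsmul_len[simp]: "length (vsmul m k xs) = length xs"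
  by (simp add: vsmul_def)
lemma vsmul_nth[simp]: "i < length xs \<Longrightarrow> vsmul m k xs ! i = (k * xs!i) mod m"
  by (simp add: vsmul_def)
lemma vecs_nth: "xs \<in> vecs m n \<Longrightarrow> i < n \<Longrightarrow> xs ! i < m"
  by (auto simp: vecs_def)
lemma vecs_len: "xs \<in> vecs m n \<Longrightarrow> length xs = n"
  by (auto simp: vecs_def)
lemma vecs_I: "length xs = n \<Longrightarrow> (\<And>i. i < n \<Longrightarrow> xs ! i < m) \<Longrightarrow> xs \<in> vecs m n"
  by (auto simp: vecs_def in_set_conv_nth)
lemma vadd_vecs: "xs \<in> vecs m n \<Longrightarrow> ys \<in> vecs m n \<Longrightarrow> m > 0 \<Longrightarrow> vadd m xs ys \<in> vecs m n"
  by (rule vecs_I) (auto simp: vecs_len)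

lemma vadd_append: "length xs = length xs' \<Longrightarrow> vadd m (xs @ ys) (xs' @ ys') = vadd m xs xs' @ vadd m ys ys'"
  by (simp add: vadd_def zip_append)

lemma gray1_len[simp]: "length (gray1 p t) = p"
  by (simp add: gray1_def)
lemma gray1_nth: "i < p \<Longrightarrow> gray1 p t ! i = (t div p + (t mod p) * i) mod p"
  by (simp add: gray1_def)
lemma concat_gray_len[simp]: "length (concat (map (gray1 p) ys)) = p * length ys"
  by (induct ys) auto
lemma concat_gray_vecs: "p > 0 \<Longrightarrow> concat (map (gray1 p) ys) \<in> vecs p (p * length ys)"
  by (induct ys) (auto simp: vecs_def gray1_def)
lemma Gray_vecs: "c \<in> vecs p \<alpha> \<times> vecs (p^2) \<beta> \<Longrightarrow> p > 0 \<Longrightarrow> Gray p c \<in> vecs p (\<alpha> + p * \<beta>)"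
  using concat_gray_vecs[of p "snd c"] by (auto simp: Gray_def vecs_def)

lemma mod_cancel_lt: assumes "(x::nat) < p" "y < p" "(a + x) mod p = (a + y) mod p" shows "x = y"
proof (rule ccontr)
  assume ne: "x \<noteq> y"
  have "(int a + int x) mod int p = (int a + int y) mod int p" using assms(3)
    by (metis of_nat_add of_nat_mod)
  hence "int p dvd (int a + int x) - (int a + int y)" by (simp add: mod_eq_dvd_iff)
  hence "int p dvd int x - int y" by simp
  hence "\<bar>int p\<bar> \<le> \<bar>int x - int y\<bar>" using ne by (intro dvd_imp_le_int) auto
  thus False using assms(1,2) by linarith
qed

lemma gray1_inj:
  assumes p: "p \<ge> 2" and t: "t < p^2" and s: "s < p^2" and eq: "gray1 p t = gray1 p s"
  shows "t = s"
proof -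
  have e0: "gray1 p t ! 0 = gray1 p s ! 0" and e1: "gray1 p t ! 1 = gray1 p s ! 1" using eq by auto
  have tp: "t div p < p" using t p by (simp add: power2_eq_square less_mult_imp_div_less)
  have sp: "s div p < p" using s p by (simp add: power2_eq_square less_mult_imp_div_less)
  have d: "t div p = s div p" using e0 p tp sp by (simp add: gray1_nth)
  have "(t div p + t mod p) mod p = (s div p + s mod p) mod p" using e1 p by (simp add: gray1_nth)
  hence "t mod p = s mod p" using d p by (intro mod_cancel_lt[of "t mod p" p "s mod p" "s div p"]) auto
  thus ?thesis using d by (metis div_mult_mod_eq)
qed

lemma concat_gray_inj:
  "length xs = length ys \<Longrightarrow> p \<ge> 2 \<Longrightarrow> \<forall>x\<in>set xs. x < p^2 \<Longrightarrow> \<forall>y\<in>set ys. y < p^2 \<Longrightarrow>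
   concat (map (gray1 p) xs) = concat (map (gray1 p) ys) \<Longrightarrow> xs = ys"
proof (induct xs ys rule: list_induct2)
  case Nil
  then show ?case by simp
next
  case (Cons x xs y ys)
  have "gray1 p x = gray1 p y \<and> concat (map (gray1 p) xs) = concat (map (gray1 p) ys)"
    using Cons.prems(4) by (simp add: append_eq_append_conv)
  then show ?case using Cons gray1_inj[of p x y] by auto
qed

lemma Gray_inj: "p \<ge> 2 \<Longrightarrow> inj_on (Gray p) (vecs p \<alpha> \<times> vecs (p^2) \<beta>)"
proof (rule inj_onI)
  fix c d assume p: "p \<ge> 2" and c: "c \<in> vecs p \<alpha> \<times> vecs (p^2) \<beta>" and d: "d \<in> vecs p \<alpha> \<times> vecs (p^2) \<beta>"
    and e: "Gray p c = Gray p d"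
  have "fst c \<in> vecs p \<alpha>" "fst d \<in> vecs p \<alpha>" "snd c \<in> vecs (p^2) \<beta>" "snd d \<in> vecs (p^2) \<beta>"
    using c d by (simp_all add: mem_Times_iff)
  note cd = this
  have "length (fst c) = length (fst d)" using cd by (simp add: vecs_len)
  hence "fst c = fst d \<and> concat (map (gray1 p) (snd c)) = concat (map (gray1 p) (snd d))"
    using e by (simp add: Gray_def append_eq_append_conv)
  moreover have "snd c = snd d"
  proof (rule concat_gray_inj[of "snd c" "snd d" p])
    show "length (snd c) = length (snd d)" using cd by (simp add: vecs_len)
    show "p \<ge> 2" using p .
    show "\<forall>x\<in>set (snd c). x < p^2" using cd(3) unfolding vecs_def by blast
    show "\<forall>x\<in>set (snd d). x < p^2" using cd(4) unfolding vecs_def by blast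
  qed (use calculation in blast)
  ultimately show "c = d" by (simp add: prod_eq_iff)
qed

lemma gray1_add:
  assumes p: "p > 0" and u: "u mod p = 0"
  shows "gray1 p ((t + u) mod p^2) = vadd p (gray1 p t) (gray1 p u)"
proof (rule nth_equalityI)
  show "length (gray1 p ((t + u) mod p^2)) = length (vadd p (gray1 p t) (gray1 p u))" by simp
next
  fix i assume "i < length (gray1 p ((t + u) mod p^2))"
  hence i: "i < p" by simp
  obtain q where q: "u = p * q" using u by auto
  have m: "(t + u) mod p^2 = p * ((t + u) div p mod p) + (t + u) mod p"
    by (simp add: power2_eq_square mod_mult2_eq)
  have "(t + u) mod p^2 div p = ((t + u) mod p + p * ((t + u) div p mod p)) div p"
    by (subst m) (simp add: add.commute)
  also have "\<dots> = (t + u) div p mod p" using p by simp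
  finally have a0: "(t + u) mod p^2 div p = (t + u) div p mod p" .
  have "(t + u) div p = t div p + q" using p by (simp add: q)
  hence a: "(t + u) mod p^2 div p = (t div p + q) mod p" using a0 by simp
  have b: "(t + u) mod p^2 mod p = t mod p" using p
    using p by (simp add: q mod_mult2_eq power2_eq_square)
  have "gray1 p ((t + u) mod p^2) ! i = ((t div p + q) mod p + t mod p * i) mod p"
    using i by (simp add: gray1_nth a b)
  also have "\<dots> = ((t div p + t mod p * i) mod p + (q + 0 * i) mod p) mod p"
    using mod_add_left_eq[of "t div p + q" p "t mod p * i"] mod_add_eq[of "t div p + t mod p * i" p q]
    by (simp add: ac_simps)
  also have "\<dots> = vadd p (gray1 p t) (gray1 p u) ! i"
    using i p by (simp add: gray1_nth q)
  finally show "gray1 p ((t + u) mod p^2) ! i = vadd p (gray1 p t) (gray1 p u) ! i" .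
qed

lemma vadd_Cons[simp]: "vadd m (x#xs) (y#ys) = ((x + y) mod m) # vadd m xs ys"
  by (simp add: vadd_def)

lemma pmul_zero_dvd: assumes "(p::nat) > 0" "p * x mod p^2 = 0" shows "x mod p = 0"
proof -
  have "p * x mod (p * p) = p * (x mod p)" by (rule mod_mult_mult1)
  thus ?thesis using assms by (simp add: power2_eq_square)
qed

lemma concat_gray_add:
  "length ys = length zs \<Longrightarrow> p > 0 \<Longrightarrow> \<forall>z\<in>set zs. z mod p = 0 \<Longrightarrow>
   concat (map (gray1 p) (vadd (p^2) ys zs)) = vadd p (concat (map (gray1 p) ys)) (concat (map (gray1 p) zs))"
proof (induct ys zs rule: list_induct2)
  case Nil
  then show ?case by (simp add: vadd_def)
next
  case (Cons y ys z zs)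
  then show ?case by (simp add: vadd_append gray1_add)
qed

lemma Gray_add:
  assumes p: "p > 0" and c: "c \<in> vecs p \<alpha> \<times> vecs (p^2) \<beta>" and u: "u \<in> vecs p \<alpha> \<times> vecs (p^2) \<beta>"
    and pu: "msmul p p u = mzero \<alpha> \<beta>"
  shows "Gray p (madd p c u) = vadd p (Gray p c) (Gray p u)"
proof -
  have cd: "fst c \<in> vecs p \<alpha>" "fst u \<in> vecs p \<alpha>" "snd c \<in> vecs (p^2) \<beta>" "snd u \<in> vecs (p^2) \<beta>"
    using c u by (simp_all add: mem_Times_iff)
  have eq: "vsmul (p^2) p (snd u) = replicate \<beta> 0" using pu by (simp add: msmul_def mzero_def)
  have z: "\<forall>z\<in>set (snd u). z mod p = 0"
  proof
    fix z assume "z \<in> set (snd u)"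
    hence "p * z mod p^2 \<in> set (vsmul (p^2) p (snd u))" by (simp add: vsmul_def)
    hence "p * z mod p^2 = 0" by (simp add: eq set_replicate_conv_if split: if_splits)
    thus "z mod p = 0" by (rule pmul_zero_dvd[OF p])
  qed
  have l1: "length (fst c) = length (fst u)" using cd by (simp add: vecs_len)
  have l2: "length (snd c) = length (snd u)" using cd by (simp add: vecs_len)
  show ?thesis
    by (simp add: Gray_def madd_def vadd_append l1 l2 concat_gray_add p z)
qed


lemma vsmul_vadd: "vsmul m k (vadd m xs ys) = vadd m (vsmul m k xs) (vsmul m k ys)"
proof (rule nth_equalityI)
  fix i assume "i < length (vsmul m k (vadd m xs ys))"
  hence i: "i < length xs" "i < length ys" by auto
  have "(k * ((xs!i + ys!i) mod m)) mod m = (k * xs!i + k * ys!i) mod m"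
    by (simp add: mod_mult_right_eq distrib_left)
  also have "\<dots> = ((k * xs!i) mod m + (k * ys!i) mod m) mod m" by (simp add: mod_add_eq)
  finally show "vsmul m k (vadd m xs ys) ! i = vadd m (vsmul m k xs) (vsmul m k ys) ! i"
    using i by simp
qed simp

lemma vsmul_vsmul: "vsmul m k (vsmul m j xs) = vsmul m (k * j) xs"
  by (simp add: vsmul_def mod_mult_right_eq mult.assoc)

lemma vsmul_mod: assumes "(m::nat) dvd m'" shows "vsmul m (k mod m') xs = vsmul m k xs"
proof -
  have "((k mod m') * x) mod m = (k * x) mod m" for x
  proof -
    have "((k mod m') * x) mod m = (((k mod m') mod m) * x) mod m" by (rule mod_mult_left_eq[symmetric])
    also have "\<dots> = ((k mod m) * x) mod m" using assms by (simp add: mod_mod_cancel)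
    also have "\<dots> = (k * x) mod m" by (rule mod_mult_left_eq)
    finally show ?thesis .
  qed
  thus ?thesis by (simp add: vsmul_def)
qed

lemma vsmul_0: "vsmul m 0 xs = replicate (length xs) 0"
  by (simp add: vsmul_def map_replicate_const)

lemma vsmul_rep0[simp]: "vsmul m k (replicate n 0) = replicate n 0"
  by (simp add: vsmul_def)

lemma vadd_rep0[simp]: "vadd m (replicate n 0) (replicate n 0) = replicate n 0"
  by (induct n) (auto simp: vadd_def)

lemma msmul_madd: "msmul p k (madd p u v) = madd p (msmul p k u) (msmul p k v)"
  by (simp add: msmul_def madd_def vsmul_vadd)

lemma msmul_mzero[simp]: "msmul p k (mzero a b) = mzero a b"
  by (simp add: msmul_def mzero_def)

lemma madd_mzero[simp]: "madd p (mzero a b) (mzero a b) = mzero a b"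
  by (simp add: madd_def mzero_def)

lemma msmul_msmul: "msmul p k (msmul p j u) = msmul p (k * j) u"
  by (simp add: msmul_def vsmul_vsmul)

lemma msum_msmul: "msmul p k (msum p a b ws) = msum p a b (map (msmul p k) ws)"
  by (induct ws) (simp_all add: msum_def msmul_madd)

lemma msum_zeros: "\<forall>w\<in>set ws. w = mzero a b \<Longrightarrow> msum p a b ws = mzero a b"
  by (induct ws) (simp_all add: msum_def)

lemma msmul_0: "u \<in> vecs p a \<times> vecs (p^2) b \<Longrightarrow> msmul p 0 u = mzero a b"
  by (auto simp: msmul_def mzero_def vsmul_0 vecs_len mem_Times_iff)

lemma msmul_mod: "p > 0 \<Longrightarrow> msmul p (k mod p^2) u = msmul p k u"
  by (simp add: msmul_def vsmul_mod)


lemma f_mult_p: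
  assumes p: "p > 0"
    and us: "\<forall>u\<in>set us. u \<in> vecs p \<alpha> \<times> vecs (p^2) \<beta> \<and> msmul p p u = mzero \<alpha> \<beta>"
    and la: "length a = length us" and lb: "length b = length vs"
  shows "msmul p p (msum p \<alpha> \<beta> (map2 (msmul p) a us @ map2 (msmul p) b vs)) =
         msum p \<alpha> \<beta> (map2 (msmul p) (replicate (length us) 0) us @ map2 (msmul p) (map (\<lambda>x. p * x mod p^2) b) vs)"
proof -
  have 1: "map (msmul p p) (map2 (msmul p) a us) = map2 (msmul p) (replicate (length us) 0) us"
  proof (rule nth_equalityI)
    fix i assume "i < length (map (msmul p p) (map2 (msmul p) a us))"
    hence i: "i < length us" using la by simp
    have ui: "us ! i \<in> vecs p \<alpha> \<times> vecs (p^2) \<beta>" "msmul p p (us ! i) = mzero \<alpha> \<beta>"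
      using us i by (auto simp del: mem_Times_iff)
    have "msmul p p (msmul p (a!i) (us!i)) = msmul p (a!i) (msmul p p (us!i))"
      by (simp add: msmul_msmul mult.commute)
    also have "\<dots> = msmul p 0 (us!i)" using ui by (simp add: msmul_0)
    finally show "map (msmul p p) (map2 (msmul p) a us) ! i = map2 (msmul p) (replicate (length us) 0) us ! i"
      using i la by simp
  qed (simp add: la)
  have 2: "map (msmul p p) (map2 (msmul p) b vs) = map2 (msmul p) (map (\<lambda>x. p * x mod p^2) b) vs"
  proof (rule nth_equalityI)
    fix i assume "i < length (map (msmul p p) (map2 (msmul p) b vs))"
    hence i: "i < length vs" using lb by simp
    have "msmul p p (msmul p (b!i) (vs!i)) = msmul p (p * b!i mod p^2) (vs!i)"
      using p by (simp add: msmul_msmul msmul_mod)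
    thus "map (msmul p p) (map2 (msmul p) b vs) ! i = map2 (msmul p) (map (\<lambda>x. p * x mod p^2) b) vs ! i"
      using i lb by simp
  qed (simp add: lb)
  show ?thesis unfolding msum_msmul map_append 1 2 ..
qed

lemma f_zero:
  assumes "\<forall>u\<in>set us. u \<in> vecs p \<alpha> \<times> vecs (p^2) \<beta>" "\<forall>u\<in>set vs. u \<in> vecs p \<alpha> \<times> vecs (p^2) \<beta>"
  shows "msum p \<alpha> \<beta> (map2 (msmul p) (replicate (length us) 0) us @ map2 (msmul p) (replicate (length vs) 0) vs) = mzero \<alpha> \<beta>"
proof (rule msum_zeros)
  have "\<forall>w\<in>set (map2 (msmul p) (replicate (length xs) 0) xs). w = mzero \<alpha> \<beta>"
    if "\<forall>u\<in>set xs. u \<in> vecs p \<alpha> \<times> vecs (p^2) \<beta>" for xs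
    using that by (induct xs) (auto simp: msmul_0 simp del: mem_Times_iff)
  thus "\<forall>w\<in>set (map2 (msmul p) (replicate (length us) 0) us @ map2 (msmul p) (replicate (length vs) 0) vs). w = mzero \<alpha> \<beta>"
    using assms by (metis Un_iff set_append)
qed

lemma map_rep0_iff: "(map g b = replicate (length b) (0::nat)) \<longleftrightarrow> (\<forall>x\<in>set b. g x = 0)"
  by (induct b) auto

lemma card_mult_p: assumes "(p::nat) > 0" shows "card {x. x < p^2 \<and> x mod p = 0} = p"
proof -
  have "{x. x < p^2 \<and> x mod p = 0} = (\<lambda>i. p * i) ` {0..<p}"
  proof (intro equalityI subsetI)
    fix x assume "x \<in> {x. x < p^2 \<and> x mod p = 0}"
    then obtain q where "x = p * q" "p * q < p * p" by (auto simp: power2_eq_square)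
    thus "x \<in> (\<lambda>i. p * i) ` {0..<p}" by auto
  next
    fix x assume "x \<in> (\<lambda>i. p * i) ` {0..<p}"
    thus "x \<in> {x. x < p^2 \<and> x mod p = 0}" using assms by (auto simp: power2_eq_square)
  qed
  moreover have "inj_on (\<lambda>i. p * i) {0..<p}" using assms by (auto simp: inj_on_def)
  ultimately show ?thesis by (simp add: card_image)
qed


lemma card_Cp:
  assumes p: "p > 0" and ht: "has_type p \<alpha> \<beta> \<gamma> \<delta> \<kappa> CC"
  shows "card {c\<in>CC. msmul p p c = mzero \<alpha> \<beta>} = p^(\<gamma>+\<delta>)"
proof -
  have sub: "CC \<subseteq> vecs p \<alpha> \<times> vecs (p^2) \<beta>" using ht by (simp add: has_type_def additive_code_def)
  obtain us vs where lus: "length us = \<gamma>" and lvs: "length vs = \<delta>" and sus: "set us \<subseteq> CC"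
    and svs: "set vs \<subseteq> CC" and pus: "\<forall>u\<in>set us. msmul p p u = mzero \<alpha> \<beta>"
    and bij: "bij_betw (\<lambda>(a, b). msum p \<alpha> \<beta> (map2 (msmul p) a us @ map2 (msmul p) b vs))
          (vecs p \<gamma> \<times> vecs (p^2) \<delta>) CC"
    using ht unfolding has_type_def by blast
  define f where "f = (\<lambda>(a, b). msum p \<alpha> \<beta> (map2 (msmul p) a us @ map2 (msmul p) b vs))"
  define D where "D = vecs p \<gamma> \<times> vecs (p^2) \<delta>"
  define B where "B = {b \<in> vecs (p^2) \<delta>. \<forall>x\<in>set b. x mod p = 0}"
  have bij': "bij_betw f D CC" using bij by (simp add: f_def D_def)
  have inj: "inj_on f D" using bij' by (rule bij_betw_imp_inj_on)
  have img: "f ` D = CC" using bij' by (rule bij_betw_imp_surj_on)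
  have us: "\<forall>u\<in>set us. u \<in> vecs p \<alpha> \<times> vecs (p^2) \<beta> \<and> msmul p p u = mzero \<alpha> \<beta>"
    using sus sub pus by blast
  have vs: "\<forall>u\<in>set vs. u \<in> vecs p \<alpha> \<times> vecs (p^2) \<beta>" using svs sub by blast
  have z0: "f (replicate \<gamma> 0, replicate \<delta> 0) = mzero \<alpha> \<beta>"
    using f_zero[of us p \<alpha> \<beta> vs] us vs lus lvs by (simp add: f_def)
  have z0D: "(replicate \<gamma> 0, replicate \<delta> 0) \<in> D" using p by (simp add: D_def vecs_def)
  have key: "msmul p p (f (a, b)) = mzero \<alpha> \<beta> \<longleftrightarrow> b \<in> B" if ab: "(a, b) \<in> D" for a b
  proof -
    have la: "length a = length us" and lb: "length b = length vs" and bv: "b \<in> vecs (p^2) \<delta>"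
      using ab lus lvs by (auto simp: D_def vecs_def)
    have "msmul p p (f (a, b)) = f (replicate \<gamma> 0, map (\<lambda>x. p * x mod p^2) b)"
      using f_mult_p[OF p us la lb] lus by (simp add: f_def)
    moreover have mD: "(replicate \<gamma> 0, map (\<lambda>x. p * x mod p^2) b) \<in> D"
      using p lb lvs by (auto simp: D_def vecs_def)
    ultimately have "msmul p p (f (a, b)) = mzero \<alpha> \<beta> \<longleftrightarrow> map (\<lambda>x. p * x mod p^2) b = replicate \<delta> 0"
      using inj z0 z0D mD unfolding inj_on_def by (metis prod.inject)
    also have "\<dots> \<longleftrightarrow> (\<forall>x\<in>set b. p * x mod p^2 = 0)"
      using map_rep0_iff[of "\<lambda>x. p * x mod p^2" b] lb lvs by simp
    also have "\<dots> \<longleftrightarrow> (\<forall>x\<in>set b. x mod p = 0)"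
    proof -
      have "p * x mod p^2 = 0 \<longleftrightarrow> x mod p = 0" for x
      proof
        assume "p * x mod p^2 = 0" thus "x mod p = 0" by (rule pmul_zero_dvd[OF p])
      next
        assume "x mod p = 0" then obtain q where "x = p * q" by auto
        thus "p * x mod p^2 = 0" by (simp add: power2_eq_square)
      qed
      thus ?thesis by simp
    qed
    finally show ?thesis using bv by (simp add: B_def)
  qed
  have eq: "{c\<in>CC. msmul p p c = mzero \<alpha> \<beta>} = f ` (vecs p \<gamma> \<times> B)"
  proof (intro equalityI subsetI)
    fix c assume "c \<in> {c\<in>CC. msmul p p c = mzero \<alpha> \<beta>}"
    then obtain a b where ab: "(a, b) \<in> D" "c = f (a, b)" and m: "msmul p p c = mzero \<alpha> \<beta>"
      using img by auto
    hence "b \<in> B" using key by blast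
    thus "c \<in> f ` (vecs p \<gamma> \<times> B)" using ab by (auto simp: D_def)
  next
    fix c assume "c \<in> f ` (vecs p \<gamma> \<times> B)"
    then obtain a b where ab: "a \<in> vecs p \<gamma>" "b \<in> B" "c = f (a, b)" by auto
    hence abD: "(a, b) \<in> D" by (simp add: D_def B_def)
    hence "c \<in> CC" using img ab by auto
    thus "c \<in> {c\<in>CC. msmul p p c = mzero \<alpha> \<beta>}" using key[OF abD] ab by simp
  qed
  have "vecs p \<gamma> \<times> B \<subseteq> D" by (auto simp: D_def B_def)
  hence "card (f ` (vecs p \<gamma> \<times> B)) = card (vecs p \<gamma> \<times> B)"
    using inj by (intro card_image) (rule inj_on_subset)
  also have "\<dots> = card (vecs p \<gamma>) * card B" by (rule card_cartesian_product)
  also have "card B = p ^ \<delta>"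
  proof -
    have "B = {xs. set xs \<subseteq> {x. x < p^2 \<and> x mod p = 0} \<and> length xs = \<delta>}"
      by (auto simp: B_def vecs_def)
    thus ?thesis using card_mult_p[OF p] by (simp add: card_lists_length_eq)
  qed
  finally show ?thesis using eq by (simp add: card_vecs power_add)
qed


definition ZG :: "nat \<Rightarrow> nat \<Rightarrow> nat list monoid" where
  "ZG p n = \<lparr>carrier = vecs p n, mult = vadd p, one = replicate n 0\<rparr>"

lemma ZG_simps[simp]: "carrier (ZG p n) = vecs p n" "mult (ZG p n) = vadd p" "one (ZG p n) = replicate n 0"
  by (simp_all add: ZG_def)

lemma vadd_assoc: "x \<in> vecs p n \<Longrightarrow> y \<in> vecs p n \<Longrightarrow> z \<in> vecs p n \<Longrightarrow>
  vadd p (vadd p x y) z = vadd p x (vadd p y z)"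
  by (rule nth_equalityI) (simp_all add: vecs_len mod_add_left_eq mod_add_right_eq add.assoc)

lemma vadd_lzero: "x \<in> vecs p n \<Longrightarrow> vadd p (replicate n 0) x = x"
  by (rule nth_equalityI) (simp_all add: vecs_len vecs_nth)

lemma ZG_group: assumes p: "p > 0" shows "group (ZG p n)"
proof (rule groupI)
  fix x assume x: "x \<in> carrier (ZG p n)"
  have "vneg p x \<in> vecs p n" using p x by (intro vecs_I) (auto simp: vneg_def vecs_len)
  moreover have "vadd p (vneg p x) x = replicate n 0"
  proof (rule nth_equalityI)
    fix i assume "i < length (vadd p (vneg p x) x)"
    hence i: "i < n" using x by (simp add: vneg_def vecs_len)
    have xi: "x ! i < p" using x i by (simp add: vecs_nth)
    have "((p - x!i) mod p + x!i) mod p = (p - x!i + x!i) mod p" by (rule mod_add_left_eq)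
    also have "\<dots> = 0" using xi by simp
    finally show "vadd p (vneg p x) x ! i = replicate n 0 ! i" using i x by (simp add: vneg_def vecs_len)
  qed (use x in \<open>simp add: vneg_def vecs_len\<close>)
  ultimately show "\<exists>y\<in>carrier (ZG p n). y \<otimes>\<^bsub>ZG p n\<^esub> x = \<one>\<^bsub>ZG p n\<^esub>" by auto
qed (auto simp: vadd_vecs p vadd_assoc vadd_lzero, simp add: vecs_def p)

lemma kernel_subgroup:
  assumes p: "p > 0" and C: "C \<subseteq> vecs p n"
  shows "subgroup (kernel_set p n C) (ZG p n)"
proof -
  interpret G: group "ZG p n" using ZG_group[OF p] .
  show ?thesis
  proof (rule G.subgroupI)
    show "kernel_set p n C \<subseteq> carrier (ZG p n)" by (auto simp: kernel_set_def)
    have "(\<lambda>c. vadd p c (replicate n 0)) ` C = C"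
    proof -
      have "(\<lambda>c. vadd p c (replicate n 0)) ` C = (\<lambda>c. c) ` C"
        using C G.r_one by (intro image_cong) auto
      thus ?thesis by simp
    qed
    hence "replicate n 0 \<in> kernel_set p n C" using p by (simp add: kernel_set_def vecs_def)
    thus "kernel_set p n C \<noteq> {}" by auto
  next
    fix x y assume x: "x \<in> kernel_set p n C" and y: "y \<in> kernel_set p n C"
    hence xv: "x \<in> vecs p n" and yv: "y \<in> vecs p n" and ix: "(\<lambda>c. vadd p c x) ` C = C"
      and iy: "(\<lambda>c. vadd p c y) ` C = C" by (auto simp: kernel_set_def)
    have "(\<lambda>c. vadd p c (vadd p x y)) ` C = (\<lambda>c. vadd p c y) ` ((\<lambda>c. vadd p c x) ` C)"
      unfolding image_image using C xv yv by (intro image_cong) (auto simp: vadd_assoc)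
    also have "\<dots> = C" using ix iy by simp
    finally show "x \<otimes>\<^bsub>ZG p n\<^esub> y \<in> kernel_set p n C" using xv yv p by (simp add: kernel_set_def vadd_vecs)
  next
    fix x assume x: "x \<in> kernel_set p n C"
    hence xv: "x \<in> carrier (ZG p n)" and ix: "(\<lambda>c. vadd p c x) ` C = C" by (auto simp: kernel_set_def)
    let ?i = "inv\<^bsub>ZG p n\<^esub> x"
    have iv: "?i \<in> vecs p n" using G.inv_closed[OF xv] by simp
    have "(\<lambda>c. vadd p c ?i) ` C = (\<lambda>c. vadd p c ?i) ` ((\<lambda>c. vadd p c x) ` C)" using ix by simp
    also have "\<dots> = (\<lambda>c. c) ` C" unfolding image_image
    proof (intro image_cong refl)
      fix c assume "c \<in> C"
      hence c: "c \<in> carrier (ZG p n)" using C by auto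
      have "c \<otimes>\<^bsub>ZG p n\<^esub> x \<otimes>\<^bsub>ZG p n\<^esub> ?i = c" using c xv by (metis G.m_assoc G.r_inv G.r_one G.inv_closed)
      thus "vadd p (vadd p c x) ?i = c" by simp
    qed
    finally show "?i \<in> kernel_set p n C" using iv by (simp add: kernel_set_def)
  qed
qed

lemma kernel_card_pow:
  assumes p: "prime p" and C: "C \<subseteq> vecs p n"
  shows "\<exists>k. card (kernel_set p n C) = p ^ k"
proof -
  have p0: "p > 0" using p prime_gt_0_nat by blast
  interpret G: group "ZG p n" using ZG_group[OF p0] .
  have "card (rcosets\<^bsub>ZG p n\<^esub> kernel_set p n C) * card (kernel_set p n C) = order (ZG p n)"
    by (rule G.lagrange[OF kernel_subgroup[OF p0 C]])
  also have "order (ZG p n) = p ^ n" by (simp add: order_def card_vecs)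
  finally have "card (kernel_set p n C) dvd p ^ n" by (metis dvd_triv_right)
  thus ?thesis using divides_primepow_nat[OF p] by blast
qed

lemma concat_gray_zero: "concat (replicate b (gray1 p 0)) = replicate (p * b) 0"
proof (induct b)
  case 0 then show ?case by simp
next
  case (Suc b)
  have "gray1 p 0 = replicate p 0" by (simp add: gray1_def map_replicate_const)
  then show ?case using Suc by (simp add: replicate_add[symmetric])
qed

lemma Gray_mzero: "Gray p (mzero a b) = replicate (a + p * b) 0"
  by (simp add: Gray_def mzero_def concat_gray_zero replicate_add)


theorem lemma12:
  fixes p \<alpha> \<beta> \<gamma> \<delta> \<kappa> :: nat and CC :: "mixvec set"
  assumes "prime p" and "p > 2"
    and "has_type p \<alpha> \<beta> \<gamma> \<delta> \<kappa> CC"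
  shows "ker_dim p (\<alpha> + p * \<beta>) (Gray p ` CC) \<in> {\<gamma> + \<delta> .. \<gamma> + 2 * \<delta>}"
proof -
  note ht = assms(3)
  have p0: "p > 0" and p2: "p \<ge> 2" and p1: "p > 1" using assms(2) by auto
  define n where "n = \<alpha> + p * \<beta>"
  define C where "C = Gray p ` CC"
  define K where "K = kernel_set p n C"
  define Cp where "Cp = {c\<in>CC. msmul p p c = mzero \<alpha> \<beta>}"
  have ac: "additive_code p \<alpha> \<beta> CC" using ht by (simp add: has_type_def)
  have sub: "CC \<subseteq> vecs p \<alpha> \<times> vecs (p^2) \<beta>" using ac by (simp add: additive_code_def)
  have z: "mzero \<alpha> \<beta> \<in> CC" using ac by (simp add: additive_code_def)
  have cl: "\<And>u v. u \<in> CC \<Longrightarrow> v \<in> CC \<Longrightarrow> madd p u v \<in> CC" using ac by (simp add: additive_code_def)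
  have finCC: "finite CC" using sub finite_vecs by (meson finite_SigmaI finite_subset)
  have Cv: "C \<subseteq> vecs p n" using sub Gray_vecs[OF _ p0] by (auto simp: C_def n_def simp del: mem_Times_iff)
  have finC: "finite C" using finCC by (simp add: C_def)
  have injG: "inj_on (Gray p) CC" using Gray_inj[OF p2] sub by (rule inj_on_subset)
  obtain us vs where bij: "bij_betw (\<lambda>(a, b). msum p \<alpha> \<beta> (map2 (msmul p) a us @ map2 (msmul p) b vs))
          (vecs p \<gamma> \<times> vecs (p^2) \<delta>) CC"
    using ht unfolding has_type_def by blast
  have "card CC = card (vecs p \<gamma> \<times> vecs (p^2) \<delta>)" using bij by (simp add: bij_betw_same_card)
  also have "\<dots> = p ^ (\<gamma> + 2 * \<delta>)" by (simp add: card_cartesian_product card_vecs power_add power_mult)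
  finally have cardC: "card C = p ^ (\<gamma> + 2 * \<delta>)" using injG by (simp add: C_def card_image)
  obtain k where k: "card K = p ^ k" using kernel_card_pow[OF assms(1) Cv] by (auto simp: K_def)
  have KC: "K \<subseteq> C"
  proof
    fix x assume "x \<in> K"
    hence xv: "x \<in> vecs p n" and ix: "(\<lambda>c. vadd p c x) ` C = C" by (auto simp: K_def kernel_set_def)
    have "Gray p (mzero \<alpha> \<beta>) \<in> C" using z by (simp add: C_def)
    hence "vadd p (Gray p (mzero \<alpha> \<beta>)) x \<in> C" using ix by blast
    thus "x \<in> C" using xv by (simp add: Gray_mzero n_def[symmetric] vadd_lzero)
  qed
  have CpK: "Gray p ` Cp \<subseteq> K"
  proof
    fix x assume "x \<in> Gray p ` Cp"
    then obtain u where u: "u \<in> CC" "msmul p p u = mzero \<alpha> \<beta>" and x: "x = Gray p u" by (auto simp: Cp_def)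
    have xv: "x \<in> vecs p n" using Cv u x by (auto simp: C_def)
    have s1: "(\<lambda>c. vadd p c x) ` C \<subseteq> C"
    proof
      fix y assume "y \<in> (\<lambda>c. vadd p c x) ` C"
      then obtain c where c: "c \<in> CC" "y = vadd p (Gray p c) x" by (auto simp: C_def)
      have cm: "c \<in> vecs p \<alpha> \<times> vecs (p^2) \<beta>" using sub c(1) by blast
      have um: "u \<in> vecs p \<alpha> \<times> vecs (p^2) \<beta>" using sub u(1) by blast
      have "y = Gray p (madd p c u)" using Gray_add[OF p0 cm um u(2)] c(2) x by simp
      thus "y \<in> C" using cl[OF c(1) u(1)] by (simp add: C_def)
    qed
    have "inj_on (\<lambda>c. vadd p c x) C"
    proof (rule inj_onI)
      fix a b assume a: "a \<in> C" and b: "b \<in> C" and e: "vadd p a x = vadd p b x"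
      have av: "a \<in> vecs p n" and bv: "b \<in> vecs p n" using a b Cv by auto
      show "a = b"
      proof (rule nth_equalityI)
        show "length a = length b" using av bv by (simp add: vecs_len)
        fix i assume "i < length a"
        hence i: "i < n" using av by (simp add: vecs_len)
        have "vadd p a x ! i = vadd p b x ! i" using e by simp
        hence "(x ! i + a ! i) mod p = (x ! i + b ! i) mod p" using i av bv xv by (simp add: vecs_len add.commute)
        moreover have "a ! i < p" "b ! i < p" using i av bv by (simp_all add: vecs_nth)
        ultimately show "a ! i = b ! i" using mod_cancel_lt[of "a!i" p "b!i" "x!i"] by blast
      qed
    qed
    hence "card ((\<lambda>c. vadd p c x) ` C) = card C" by (rule card_image)
    hence "(\<lambda>c. vadd p c x) ` C = C" using s1 finC by (intro card_subset_eq) auto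
    thus "x \<in> K" using xv by (simp add: K_def kernel_set_def)
  qed
  have finK: "finite K" using KC finC finite_subset by blast
  have "card (Gray p ` Cp) = card Cp" using injG by (intro card_image) (auto simp: Cp_def intro: inj_on_subset)
  also have "card Cp = p ^ (\<gamma> + \<delta>)" unfolding Cp_def by (rule card_Cp[OF p0 ht])
  finally have "p ^ (\<gamma> + \<delta>) \<le> card K" using CpK finK card_mono by metis
  hence lo: "\<gamma> + \<delta> \<le> k" using k p1 by simp
  have "card K \<le> p ^ (\<gamma> + 2 * \<delta>)" using KC finC cardC card_mono by metis
  hence hi: "k \<le> \<gamma> + 2 * \<delta>" using k p1 by simp
  have "ker_dim p n C = k"
    unfolding ker_dim_def K_def[symmetric]
  proof (rule the_equality)
    show "card K = p ^ k" by (rule k)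
    fix j assume "card K = p ^ j" thus "j = k" using k p1 by (simp add: power_inject_exp)
  qed
  thus ?thesis using lo hi by (simp add: n_def C_def)
qed

end
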